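(* Let $G$ be a connected cograph which is $k$-connected, and let $S$ be a minimal vertex separator of $G$ with $|S|=k$. Then every vertex $v\in V(G)\setminus S$ is adjacent to every vertex of $S$.
   Context: A cograph is a graph that can be built from single vertices by repeatedly taking disjoint unions and joins; equivalently, a graph with no induced path on four vertices. A vertex separator of a connected graph $G$ is a set $S\subset V(G)$ such that the subgraph induced on $V(G)\setminus S$ is disconnected; it is minimal if no proper subset of $S$ is a vertex separator; a minimum vertex separator is a minimal vertex separator of least size. The paper calls $G$ $k$-connected if there exists a minimum vertex separator of size $k$. *)

theory Defs
  imports Main
begin

definition simple_graph :: "'a set \<Rightarrow> ('a \<Rightarrow> 'a \<Rightarrow> bool) \<Rightarrow> bool" where
  "simple_graph V E \<longleftrightarrow> finite V \<and> (\<forall>x y. E x y \<longrightarrow> E y x) \<and> (\<forall>x. \<not> E x x)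
     \<and> (\<forall>x y. E x y \<longrightarrow> x \<in> V \<and> y \<in> V)"

definition reach_in :: "('a \<Rightarrow> 'a \<Rightarrow> bool) \<Rightarrow> 'a set \<Rightarrow> 'a \<Rightarrow> 'a \<Rightarrow> bool" where
  "reach_in E X = (\<lambda>x y. x \<in> X \<and> y \<in> X \<and> E x y)\<^sup>*\<^sup>*"

definition connected_on :: "('a \<Rightarrow> 'a \<Rightarrow> bool) \<Rightarrow> 'a set \<Rightarrow> bool" where
  "connected_on E X \<longleftrightarrow> X \<noteq> {} \<and> (\<forall>u\<in>X. \<forall>v\<in>X. reach_in E X u v)"

definition disconnected_on :: "('a \<Rightarrow> 'a \<Rightarrow> bool) \<Rightarrow> 'a set \<Rightarrow> bool" where
  "disconnected_on E X \<longleftrightarrow> (\<exists>u\<in>X. \<exists>v\<in>X. \<not> reach_in E X u v)"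

definition cograph :: "'a set \<Rightarrow> ('a \<Rightarrow> 'a \<Rightarrow> bool) \<Rightarrow> bool" where
  "cograph V E \<longleftrightarrow> simple_graph V E \<and>
     \<not> (\<exists>a\<in>V. \<exists>b\<in>V. \<exists>c\<in>V. \<exists>d\<in>V. distinct [a,b,c,d] \<and>
          E a b \<and> E b c \<and> E c d \<and> \<not> E a c \<and> \<not> E b d \<and> \<not> E a d)"

definition vertex_separator :: "'a set \<Rightarrow> ('a \<Rightarrow> 'a \<Rightarrow> bool) \<Rightarrow> 'a set \<Rightarrow> bool" where
  "vertex_separator V E S \<longleftrightarrow> S \<subset> V \<and> disconnected_on E (V - S)"

definition minimal_vertex_separator :: "'a set \<Rightarrow> ('a \<Rightarrow> 'a \<Rightarrow> bool) \<Rightarrow> 'a set \<Rightarrow> bool" where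
  "minimal_vertex_separator V E S \<longleftrightarrow> vertex_separator V E S \<and>
     (\<forall>T. T \<subset> S \<longrightarrow> \<not> vertex_separator V E T)"

definition minimum_vertex_separator :: "'a set \<Rightarrow> ('a \<Rightarrow> 'a \<Rightarrow> bool) \<Rightarrow> 'a set \<Rightarrow> bool" where
  "minimum_vertex_separator V E S \<longleftrightarrow> minimal_vertex_separator V E S \<and>
     (\<forall>T. minimal_vertex_separator V E T \<longrightarrow> card S \<le> card T)"

(* the paper's notion: G is k-connected iff some minimum vertex separator has size k *)
definition k_connected :: "'a set \<Rightarrow> ('a \<Rightarrow> 'a \<Rightarrow> bool) \<Rightarrow> nat \<Rightarrow> bool" where
  "k_connected V E k \<longleftrightarrow> (\<exists>S. minimum_vertex_separator V E S \<and> card S = k)"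

end

theory Submission
  imports Defs
begin

lemma cross_edge:
  assumes "R\<^sup>*\<^sup>* u v" "P u" "\<not> P v"
  shows "\<exists>x y. R\<^sup>*\<^sup>* u x \<and> R x y \<and> P x \<and> \<not> P y"
  using assms
proof (induction rule: rtranclp_induct)
  case base then show ?case by simp
next
  case (step y z)
  show ?case
  proof (cases "P y")
    case True then show ?thesis using step by blast
  next
    case False then show ?thesis using step by blast
  qed
qed

lemma reach_sym:
  assumes "\<forall>x y. E x y \<longrightarrow> E y x" "reach_in E X u v"
  shows "reach_in E X v u"
proof -
  have "(\<lambda>x y. x \<in> X \<and> y \<in> X \<and> E x y)\<^sup>*\<^sup>* u v" using assms(2) by (simp add: reach_in_def)
  then have "(\<lambda>x y. x \<in> X \<and> y \<in> X \<and> E x y)\<^sup>*\<^sup>* v u"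
  proof (induction rule: rtranclp_induct)
    case base then show ?case by simp
  next
    case (step y z)
    then show ?case using assms(1)
      by (metis (mono_tags, lifting) converse_rtranclp_into_rtranclp)
  qed
  then show ?thesis by (simp add: reach_in_def)
qed

lemma reach_trans:
  "reach_in E X u v \<Longrightarrow> reach_in E X v w \<Longrightarrow> reach_in E X u w"
  unfolding reach_in_def by (meson rtranclp_trans)

lemma reach_edge:
  "u \<in> X \<Longrightarrow> v \<in> X \<Longrightarrow> E u v \<Longrightarrow> reach_in E X u v"
  unfolding reach_in_def by auto

lemma reach_mem:
  assumes "reach_in E X u v" "u \<in> X" shows "v \<in> X"
proof -
  have "(\<lambda>x y. x \<in> X \<and> y \<in> X \<and> E x y)\<^sup>*\<^sup>* u v" using assms(1) by (simp add: reach_in_def)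
  then show ?thesis using assms(2) by (induction rule: rtranclp_induct) auto
qed

lemma nbr_in_comp:
  assumes sym: "\<forall>x y. E x y \<longrightarrow> E y x"
    and s: "s \<notin> X" and w: "w \<in> X"
    and r: "reach_in E (insert s X) w s"
  shows "\<exists>d. reach_in E X w d \<and> E d s"
proof -
  let ?R = "\<lambda>x y. x \<in> insert s X \<and> y \<in> insert s X \<and> E x y"
  have "?R\<^sup>*\<^sup>* w s" using r by (simp add: reach_in_def)
  moreover have "reach_in E X w w" by (simp add: reach_in_def)
  moreover have "\<not> reach_in E X w s"
    using s w reach_mem[of E X w s] by blast
  ultimately obtain x y where xy: "?R x y" "reach_in E X w x" "\<not> reach_in E X w y"
    using cross_edge[of ?R w s "reach_in E X w"] by blast
  have xX: "x \<in> X" using reach_mem[OF xy(2) w] .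
  have "y = s"
  proof (rule ccontr)
    assume "y \<noteq> s"
    then have "y \<in> X" using xy(1) by simp
    then have "reach_in E X x y" using xX xy(1) by (simp add: reach_edge)
    then show False using xy(2,3) reach_trans[OF xy(2)] by blast
  qed
  then show ?thesis using xy by blast
qed

theorem corollary2:
  fixes V :: "'a set" and E :: "'a \<Rightarrow> 'a \<Rightarrow> bool" and S :: "'a set" and k :: nat
  assumes "cograph V E"
    and "connected_on E V"
    and "k_connected V E k"
    and "minimal_vertex_separator V E S"
    and "card S = k"
  shows "\<forall>v \<in> V - S. \<forall>s \<in> S. E v s"
proof (intro ballI, rule ccontr)
  fix v s assume v: "v \<in> V - S" and s: "s \<in> S" and nvs: "\<not> E v s"
  have sg: "simple_graph V E" using assms(1) by (simp add: cograph_def)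
  have sym: "\<forall>x y. E x y \<longrightarrow> E y x" and irr: "\<forall>x. \<not> E x x"
    and inV: "\<forall>x y. E x y \<longrightarrow> x \<in> V \<and> y \<in> V"
    using sg by (auto simp: simple_graph_def)
  have SV: "S \<subset> V" and dis: "disconnected_on E (V - S)"
    using assms(4) by (auto simp: minimal_vertex_separator_def vertex_separator_def)
  have "\<not> vertex_separator V E (S - {s})"
    using assms(4) s by (auto simp: minimal_vertex_separator_def)
  moreover have "S - {s} \<subset> V" using SV by auto
  ultimately have "\<not> disconnected_on E (V - (S - {s}))" by (simp add: vertex_separator_def)
  moreover have eqI: "V - (S - {s}) = insert s (V - S)" using SV s by auto
  ultimately have conn: "\<forall>a\<in>insert s (V - S). \<forall>b\<in>insert s (V - S). reach_in E (insert s (V - S)) a b"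
    by (simp add: disconnected_on_def)
  let ?X = "V - S"
  have sX: "s \<notin> ?X" using s by simp
  obtain a b where ab: "a \<in> ?X" "b \<in> ?X" "\<not> reach_in E ?X a b"
    using dis by (auto simp: disconnected_on_def)
  obtain w where w: "w \<in> ?X" "\<not> reach_in E ?X v w"
  proof -
    have "\<not> reach_in E ?X v a \<or> \<not> reach_in E ?X v b"
      using ab reach_sym[OF sym] reach_trans by metis
    then show ?thesis using that ab by blast
  qed
  obtain d where d: "reach_in E ?X w d" "E d s"
    using nbr_in_comp[OF sym sX w(1)] conn w(1) by blast
  obtain d1 where d1: "reach_in E ?X v d1" "E d1 s"
    using nbr_in_comp[OF sym sX] v conn by blast
  have "(\<lambda>x y. x \<in> ?X \<and> y \<in> ?X \<and> E x y)\<^sup>*\<^sup>* d1 v"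
    using reach_sym[OF sym d1(1)] by (simp add: reach_in_def)
  moreover have "E s d1" using d1 sym by blast
  moreover have "\<not> E s v" using nvs sym by blast
  ultimately obtain x1 x2 where x:
    "(\<lambda>x y. x \<in> ?X \<and> y \<in> ?X \<and> E x y)\<^sup>*\<^sup>* d1 x1"
    "x1 \<in> ?X" "x2 \<in> ?X" "E x1 x2" "E s x1" "\<not> E s x2"
    using cross_edge[of "\<lambda>x y. x \<in> ?X \<and> y \<in> ?X \<and> E x y" d1 v "E s"] by blast
  have rx1: "reach_in E ?X v x1" using reach_trans[OF d1(1)] x(1) by (simp add: reach_in_def)
  have rx2: "reach_in E ?X v x2" using rx1 reach_edge[of x1 "V - S" x2 E, OF x(2,3,4)] reach_trans by metis
  have rvd: "\<not> reach_in E ?X v d"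
    using w(2) d(1) reach_sym[OF sym] reach_trans by metis
  have dX: "d \<in> ?X" using reach_mem[OF d(1) w(1)] .
  have "d \<noteq> x1" using rvd rx1 by blast
  moreover have "d \<noteq> x2" using rvd rx2 by blast
  moreover have "\<not> E d x1"
  proof
    assume "E d x1"
    then have "reach_in E ?X x1 d" using sym reach_edge[of x1 ?X d E] x(2) dX by blast
    then show False using reach_trans[OF rx1] rvd by blast
  qed
  moreover have "\<not> E d x2"
  proof
    assume "E d x2"
    then have "reach_in E ?X x2 d" using sym reach_edge[of x2 ?X d E] x(3) dX by blast
    then show False using reach_trans[OF rx2] rvd by blast
  qed
  moreover have "d \<in> V" "x1 \<in> V" "x2 \<in> V" "s \<in> V" using x d inV by auto
  moreover have "d \<noteq> s" "s \<noteq> x1" "s \<noteq> x2" "x1 \<noteq> x2" using d irr x s sX by auto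
  ultimately have "distinct [d,s,x1,x2]" "\<not> E d x1" "\<not> E d x2" "d \<in> V" "x1 \<in> V" "x2 \<in> V" "s \<in> V"
    by simp_all
  moreover have "\<not> E s x2" "E d s" "E s x1" "E x1 x2" using x d by auto
  ultimately have "\<exists>a\<in>V. \<exists>b\<in>V. \<exists>c\<in>V. \<exists>e\<in>V. distinct [a,b,c,e] \<and>
          E a b \<and> E b c \<and> E c e \<and> \<not> E a c \<and> \<not> E b e \<and> \<not> E a e"
    by (intro bexI[of _ d] bexI[of _ s] bexI[of _ x1] bexI[of _ x2]) simp_all
  then show False using assms(1) unfolding cograph_def by simp
qed

end
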